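(* If $\mu$ is an edge probability measure, then \[ 2\sum_{e\in\operatorname{supp}\mu}\mu(e)^2+\beta(\mu;P_3)\le 2, \] with equality if and only if $|\operatorname{supp}\mu|=1$.
   Context: $P_3$ is the path on 3 vertices. An edge probability measure is a probability measure $\mu$ on the edge set $E(K)$ of some finite complete graph $K$; $\operatorname{supp}\mu$ is the set of edges of positive mass. For a subgraph $H'\subseteq K$, $\mu(H')=\prod_{e\in E(H')}\mu(e)$, and $\beta(\mu;H)=\sum_{H'}\mu(H')$, the sum over all subgraphs $H'$ of $K$ isomorphic to $H$. *)

theory Defs
  imports Complex_Main
begin

text \<open>Simple graphs are pairs (vertex set, edge set); edges are 2-element vertex sets.\<close>

definition edges_on :: "'a set \<Rightarrow> 'a set set" where
  "edges_on V = {e. \<exists>u v. u \<in> V \<and> v \<in> V \<and> u \<noteq> v \<and> e = {u, v}}"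

abbreviation complete_edges :: "'a set \<Rightarrow> 'a set set" where
  "complete_edges V \<equiv> edges_on V"

definition graph_iso :: "'a set \<times> 'a set set \<Rightarrow> 'b set \<times> 'b set set \<Rightarrow> bool" where
  "graph_iso G H = (\<exists>f. bij_betw f (fst G) (fst H) \<and>
     (\<forall>u\<in>fst G. \<forall>v\<in>fst G. {u, v} \<in> snd G \<longleftrightarrow> {f u, f v} \<in> snd H))"

definition subgraphs_iso :: "'a set \<Rightarrow> 'b set \<times> 'b set set \<Rightarrow> ('a set \<times> 'a set set) set" where
  "subgraphs_iso V H = {(W, F). W \<subseteq> V \<and> F \<subseteq> edges_on W \<and> graph_iso (W, F) H}"

definition edge_prob_measure :: "'a set \<Rightarrow> ('a set \<Rightarrow> real) \<Rightarrow> bool" where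
  "edge_prob_measure V \<mu> \<longleftrightarrow> finite V \<and> (\<forall>e\<in>complete_edges V. \<mu> e \<ge> 0)
      \<and> (\<Sum>e\<in>complete_edges V. \<mu> e) = 1"

definition supp :: "'a set \<Rightarrow> ('a set \<Rightarrow> real) \<Rightarrow> 'a set set" where
  "supp V \<mu> = {e \<in> complete_edges V. \<mu> e > 0}"

definition beta :: "'a set \<Rightarrow> ('a set \<Rightarrow> real) \<Rightarrow> 'b set \<times> 'b set set \<Rightarrow> real" where
  "beta V \<mu> H = (\<Sum>G\<in>subgraphs_iso V H. \<Prod>e\<in>snd G. \<mu> e)"

definition P3 :: "nat set \<times> nat set set" where
  "P3 = ({0, 1, 2}, {{0, 1}, {1, 2}})"

end

theory Submission
  imports Defs
begin

lemma P3_struct: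
  assumes "G \<in> subgraphs_iso V P3"
  shows "\<exists>a b c. a \<in> V \<and> b \<in> V \<and> c \<in> V \<and> a \<noteq> b \<and> b \<noteq> c \<and> a \<noteq> c
     \<and> snd G = {{a,b},{b,c}} \<and> fst G = {a,b,c}"
proof -
  obtain W F where G: "G = (W,F)" by fastforce
  from assms G have WV: "W \<subseteq> V" and FW: "F \<subseteq> edges_on W" and iso: "graph_iso (W,F) P3"
    by (auto simp: subgraphs_iso_def)
  from iso obtain f where bij: "bij_betw f W {0,1,2}" and
    iff: "\<forall>u\<in>W. \<forall>v\<in>W. {u, v} \<in> F \<longleftrightarrow> {f u, f v} \<in> {{0::nat,1},{1,2}}"
    by (auto simp: graph_iso_def P3_def)
  have img: "f ` W = {0,1,2}" using bij by (simp add: bij_betw_def)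
  have inj: "inj_on f W" using bij by (simp add: bij_betw_def)
  obtain a where a: "a \<in> W" "f a = 0" using img by (metis imageE insertI1)
  obtain b where b: "b \<in> W" "f b = 1" using img by (metis imageE insertI1 insertI2)
  obtain c where c: "c \<in> W" "f c = 2" using img
    by (metis imageE insertI1 insertI2)
  have Wabc: "W = {a,b,c}"
  proof
    show "W \<subseteq> {a,b,c}"
    proof
      fix w assume w: "w \<in> W"
      then have "f w \<in> {0,1,2}" using img by blast
      then have "f w = f a \<or> f w = f b \<or> f w = f c" using a b c by auto
      then show "w \<in> {a,b,c}" using inj w a b c by (metis inj_onD insertCI)
    qed
  qed (use a b c in auto)
  have ab: "a \<noteq> b" "b \<noteq> c" "a \<noteq> c" using a b c by auto
  have F1: "{a,b} \<in> F" "{b,c} \<in> F" using iff a b c by auto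
  have "F \<subseteq> {{a,b},{b,c}}"
  proof
    fix e assume e: "e \<in> F"
    then obtain u v where uv: "u \<in> W" "v \<in> W" "u \<noteq> v" "e = {u,v}"
      using FW by (auto simp: edges_on_def)
    then have "{f u, f v} \<in> {{0::nat,1},{1,2}}" using iff e by auto
    moreover have "u \<in> {a,b,c}" "v \<in> {a,b,c}" using uv Wabc by auto
    moreover have n1: "{0::nat,2} \<notin> {{0::nat,1},{1,2}}" "{2::nat,0} \<notin> {{0::nat,1},{1,2}}"
      by (auto simp: doubleton_eq_iff)
    ultimately show "e \<in> {{a,b},{b,c}}" using uv(3,4) a(2) b(2) c(2)
      apply (elim insertE emptyE)
      apply (simp_all add: insert_commute)
      done
  qed
  with F1 have "F = {{a,b},{b,c}}" by auto
  moreover have "a \<in> V" "b \<in> V" "c \<in> V" using WV Wabc by auto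
  ultimately show ?thesis using G Wabc ab by (intro exI[of _ a] exI[of _ b] exI[of _ c]) simp
qed

lemma P3_union:
  assumes "G \<in> subgraphs_iso V P3"
  shows "fst G = \<Union>(snd G)"
  using P3_struct[OF assms] by auto

theorem proposition4p1:
  fixes V :: "'a set" and \<mu> :: "'a set \<Rightarrow> real"
  assumes "edge_prob_measure V \<mu>"
  shows "2 * (\<Sum>e\<in>supp V \<mu>. (\<mu> e)\<^sup>2) + beta V \<mu> P3 \<le> 2
    \<and> (2 * (\<Sum>e\<in>supp V \<mu>. (\<mu> e)\<^sup>2) + beta V \<mu> P3 = 2 \<longleftrightarrow> card (supp V \<mu>) = 1)"
proof -
  define E where "E = edges_on V"
  have finV: "finite V" and nn: "\<And>e. e \<in> E \<Longrightarrow> \<mu> e \<ge> 0" and s1: "(\<Sum>e\<in>E. \<mu> e) = 1"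
    using assms by (auto simp: edge_prob_measure_def E_def)
  have finE: "finite E"
  proof -
    have "E \<subseteq> Pow V" by (auto simp: E_def edges_on_def)
    then show ?thesis using finV finite_subset by blast
  qed
  define D where "D = Sigma E (\<lambda>e. E - {e})"
  define g where "g p = \<mu> (fst p) * \<mu> (snd p)" for p
  define T where "T = sum g D"
  define s where "s = (\<Sum>e\<in>E. (\<mu> e)\<^sup>2)"
  define S where "S = subgraphs_iso V P3"
  have finD: "finite D" using finE by (simp add: D_def)
  have gnn: "\<And>p. p \<in> D \<Longrightarrow> g p \<ge> 0" using nn by (auto simp: D_def g_def)
  have T0: "T \<ge> 0" unfolding T_def using gnn by (simp add: sum_nonneg)
  have supp_eq: "(\<Sum>e\<in>supp V \<mu>. (\<mu> e)\<^sup>2) = s"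
    unfolding s_def
    by (rule sum.mono_neutral_left) (use finE nn in \<open>auto simp: supp_def E_def less_le\<close>)
  have Ts: "T = 1 - s"
  proof -
    have "1 = (\<Sum>e\<in>E. \<mu> e) * (\<Sum>f\<in>E. \<mu> f)" using s1 by simp
    also have "\<dots> = (\<Sum>e\<in>E. \<Sum>f\<in>E. \<mu> e * \<mu> f)" by (rule sum_product)
    also have "\<dots> = (\<Sum>e\<in>E. (\<mu> e)\<^sup>2 + (\<Sum>f\<in>E - {e}. \<mu> e * \<mu> f))"
      by (rule sum.cong) (use finE in \<open>auto simp: sum.remove power2_eq_square\<close>)
    also have "\<dots> = s + (\<Sum>e\<in>E. \<Sum>f\<in>E - {e}. \<mu> e * \<mu> f)"
      by (simp add: s_def sum.distrib)
    also have "(\<Sum>e\<in>E. \<Sum>f\<in>E - {e}. \<mu> e * \<mu> f) = T"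
      unfolding T_def D_def g_def using finE by (simp add: sum.Sigma split_beta')
    finally show ?thesis by simp
  qed
  define h where "h G = (SOME p. p \<in> D \<and> snd G = {fst p, snd p})" for G :: "'a set \<times> 'a set set"
  have hprop: "h G \<in> D \<and> snd G = {fst (h G), snd (h G)}" if G: "G \<in> S" for G
  proof -
    obtain a b c where abc: "a \<in> V" "b \<in> V" "c \<in> V" "a \<noteq> b" "b \<noteq> c" "a \<noteq> c"
      "snd G = {{a,b},{b,c}}" using P3_struct[of G V] G S_def by blast
    have "({a,b},{b,c}) \<in> D \<and> snd G = {fst ({a,b},{b,c}), snd ({a,b},{b,c})}"
      using abc by (auto simp: D_def E_def edges_on_def doubleton_eq_iff)
    then show ?thesis unfolding h_def by (rule someI)
  qed
  have prodg: "(\<Prod>e\<in>snd G. \<mu> e) = g (h G)" if G: "G \<in> S" for G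
  proof -
    have "fst (h G) \<noteq> snd (h G)" using hprop[OF G] by (auto simp: D_def)
    then show ?thesis using hprop[OF G] by (simp add: g_def)
  qed
  have injh: "inj_on h S"
  proof
    fix G1 G2 assume G: "G1 \<in> S" "G2 \<in> S" "h G1 = h G2"
    then have "snd G1 = snd G2" using hprop by metis
    moreover then have "fst G1 = fst G2" using P3_union G unfolding S_def by metis
    ultimately show "G1 = G2" by (simp add: prod_eq_iff)
  qed
  have hS: "h ` S \<subseteq> D" using hprop by blast
  have beta_eq: "beta V \<mu> P3 = sum g (h ` S)"
  proof -
    have "beta V \<mu> P3 = (\<Sum>G\<in>S. g (h G))"
      unfolding beta_def S_def[symmetric] by (rule sum.cong) (auto simp: prodg)
    also have "\<dots> = sum g (h ` S)" using sum.reindex[OF injh, of g] by simp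
    finally show ?thesis .
  qed
  have beta_le: "beta V \<mu> P3 \<le> T"
    unfolding beta_eq T_def by (rule sum_mono2[OF finD hS]) (use gnn in auto)
  have beta_ge: "beta V \<mu> P3 \<ge> 0"
    unfolding beta_eq by (rule sum_nonneg) (use hS gnn in blast)
  have part1: "2 * s + beta V \<mu> P3 \<le> 2" using beta_le Ts T0 by linarith
  have part2: "2 * s + beta V \<mu> P3 = 2 \<longleftrightarrow> card (supp V \<mu>) = 1"
  proof
    assume eq: "2 * s + beta V \<mu> P3 = 2"
    then have T00: "T = 0" using beta_le Ts T0 by linarith
    have allz: "\<forall>p\<in>D. g p = 0"
      using T00 unfolding T_def using sum_nonneg_eq_0_iff[OF finD] gnn by blast
    have finsupp: "finite (supp V \<mu>)" using finE by (auto simp: supp_def E_def)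
    have ne: "supp V \<mu> \<noteq> {}"
    proof
      assume "supp V \<mu> = {}"
      then have "\<forall>e\<in>E. \<mu> e = 0" using nn
        unfolding supp_def E_def by (metis (mono_tags, lifting) empty_Collect_eq order_less_le)
      then show False using s1 by simp
    qed
    show "card (supp V \<mu>) = 1"
    proof (rule ccontr)
      assume "card (supp V \<mu>) \<noteq> 1"
      moreover have "card (supp V \<mu>) \<noteq> 0" using ne finsupp by simp
      ultimately have "card (supp V \<mu>) \<ge> 2" by linarith
      obtain e where e: "e \<in> supp V \<mu>" using ne by blast
      have "supp V \<mu> - {e} \<noteq> {}"
      proof
        assume "supp V \<mu> - {e} = {}"
        then have "supp V \<mu> = {e}" using e by blast
        then show False using \<open>card (supp V \<mu>) \<ge> 2\<close> by simp
      qed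
      then obtain f where "f \<in> supp V \<mu>" "e \<noteq> f" by blast
      with e have "(e,f) \<in> D" "g (e,f) > 0" by (auto simp: D_def supp_def E_def g_def)
      then show False using allz by auto
    qed
  next
    assume c1: "card (supp V \<mu>) = 1"
    then obtain e0 where e0: "supp V \<mu> = {e0}" by (auto simp: card_Suc_eq)
    have "s = (\<Sum>e\<in>supp V \<mu>. (\<mu> e)\<^sup>2)" using supp_eq by simp
    also have "\<dots> = (\<mu> e0)\<^sup>2" using e0 by simp
    also have "\<mu> e0 = 1"
    proof -
      have "(\<Sum>e\<in>E. \<mu> e) = (\<Sum>e\<in>supp V \<mu>. \<mu> e)"
        by (rule sum.mono_neutral_right) (use finE nn in \<open>auto simp: supp_def E_def less_le\<close>)
      then show ?thesis using s1 e0 by simp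
    qed
    finally have "s = 1" by simp
    then show "2 * s + beta V \<mu> P3 = 2" using beta_le beta_ge Ts by linarith
  qed
  show ?thesis using part1 part2 supp_eq by simp
qed

end
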